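(* Let $\Gamma$ be a finite Abelian group, $S$ a symmetric multiset of elements of $\Gamma$ with $|S|=d$, and $G=\mathrm{Cay}(\Gamma,S)$. Then for every integer $t\ge0$, $$\frac{\mathrm{CP}_t}{\mathrm{CP}_{2t}} \le (2e)^{4d}.$$
   Context: A multiset $S$ of elements of $\Gamma$ is symmetric if $x$ and $-x$ have equal multiplicity for all $x$; $\mathrm{Cay}(\Gamma,S)$ has vertex set $\Gamma$ and an edge $(v,v+s)$ for every $v$ and every element $s$ of $S$ (with multiplicity). With $\mathbf{A}$ the normalized adjacency matrix of $G$ (here $\mathbf{A}=\frac1d\times$ the adjacency matrix), $\mathrm{CP}_t=\|(\tfrac12I+\tfrac12\mathbf{A})^te_0\|_2^2$ is the $t$-step lazy collision probability from the identity $0\in\Gamma$. *)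

theory Defs
  imports "HOL-Analysis.Analysis" "HOL-Library.Multiset"
begin

primrec matpow :: "real^'n^'n \<Rightarrow> nat \<Rightarrow> real^'n^'n" where
  "matpow M 0 = mat 1"
| "matpow M (Suc k) = matpow M k ** M"

definition symmetric_mset :: "'a::ab_group_add multiset \<Rightarrow> bool" where
  "symmetric_mset S \<longleftrightarrow> (\<forall>x. count S x = count S (- x))"

text \<open>Adjacency matrix of Cay(Gamma,S): entry (u,v) is the number of edges (u,u+s), s in S,
  with u+s = v, i.e. the multiplicity of v - u in S.\<close>
definition cay_adj :: "('a::{ab_group_add,finite}) multiset \<Rightarrow> ((real, 'a) vec, 'a) vec" where
  "cay_adj S = (\<chi> u. \<chi> v. real (count S (v - u)))"

definition cay_norm_adj :: "('a::{ab_group_add,finite}) multiset \<Rightarrow> ((real, 'a) vec, 'a) vec" where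
  "cay_norm_adj S = (1 / real (size S)) *\<^sub>R cay_adj S"

definition lazy_walk :: "('a::{ab_group_add,finite}) multiset \<Rightarrow> ((real, 'a) vec, 'a) vec" where
  "lazy_walk S = (1/2) *\<^sub>R mat 1 + (1/2) *\<^sub>R cay_norm_adj S"

definition CP :: "('a::{ab_group_add,finite}) multiset \<Rightarrow> nat \<Rightarrow> real" where
  "CP S t = (norm (matpow (lazy_walk S) t *v axis 0 1)) ^ 2"

end

theory Submission
  imports Defs
begin

typedef ('a::"{ab_group_add,finite}") cv = "UNIV :: ('a \<Rightarrow> real) set"
  morphisms val Abs_cv by simp

lemma val_Abs [simp]: "val (Abs_cv f) = f"
  by (simp add: Abs_cv_inverse)

lemma cv_eqI: "(\<And>x. val a x = val b x) \<Longrightarrow> a = b"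
  by (metis ext val_inject)

lemma sum_shift: "(\<Sum>y\<in>UNIV. h (u + y)) = (\<Sum>y\<in>UNIV. (h y :: real))"
  for u :: "'a::{ab_group_add,finite}"
  by (rule sum.reindex_bij_witness[of _ "\<lambda>y. y - u" "\<lambda>y. u + y"]) auto

lemma sum_flip: "(\<Sum>y\<in>UNIV. h (x - y)) = (\<Sum>y\<in>UNIV. (h y :: real))"
  for x :: "'a::{ab_group_add,finite}"
  by (rule sum.reindex_bij_witness[of _ "\<lambda>y. x - y" "\<lambda>y. x - y"]) auto

lemma sum_neg: "(\<Sum>y\<in>UNIV. h (- y)) = (\<Sum>y\<in>UNIV. (h y :: real))"
  for h :: "'a::{ab_group_add,finite} \<Rightarrow> real"
  by (rule sum.reindex_bij_witness[of _ "\<lambda>y. - y" "\<lambda>y. - y"]) auto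

lemma ifmul1: "(if P then 1 else 0) * (c::real) = (if P then c else 0)" by simp

instantiation cv :: ("{ab_group_add,finite}") comm_ring_1
begin
definition "0 = Abs_cv (\<lambda>_. 0)"
definition "1 = Abs_cv (\<lambda>x. if x = 0 then 1 else 0)"
definition "a + b = Abs_cv (\<lambda>x. val a x + val b x)"
definition "- a = Abs_cv (\<lambda>x. - val a x)"
definition "a - b = Abs_cv (\<lambda>x. val a x - val b x)"
definition "a * b = Abs_cv (\<lambda>x. \<Sum>y\<in>UNIV. val a y * val b (x - y))"
instance
proof
  fix a b c :: "'a cv"
  show "a * b * c = a * (b * c)"
  proof (rule cv_eqI)
    fix x
    have "val (a * b * c) x = (\<Sum>y\<in>UNIV. \<Sum>z\<in>UNIV. val a z * val b (y - z) * val c (x - y))"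
      by (simp add: times_cv_def sum_distrib_right)
    also have "\<dots> = (\<Sum>z\<in>UNIV. \<Sum>y\<in>UNIV. val a z * val b (y - z) * val c (x - y))"
      by (rule sum.swap)
    also have "\<dots> = (\<Sum>z\<in>UNIV. \<Sum>w\<in>UNIV. val a z * val b w * val c (x - z - w))"
    proof (rule sum.cong[OF refl])
      fix z
      show "(\<Sum>y\<in>UNIV. val a z * val b (y - z) * val c (x - y)) = (\<Sum>w\<in>UNIV. val a z * val b w * val c (x - z - w))"
        using sum_shift[of "\<lambda>y. val a z * val b (y - z) * val c (x - y)" z, symmetric]
        by (simp add: algebra_simps)
    qed
    also have "\<dots> = val (a * (b * c)) x"
      by (simp add: times_cv_def sum_distrib_left algebra_simps)
    finally show "val (a * b * c) x = val (a * (b * c)) x" .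
  qed
  show "a * b = b * a"
  proof (rule cv_eqI)
    fix x
    show "val (a * b) x = val (b * a) x"
      using sum_flip[of "\<lambda>y. val a y * val b (x - y)" x]
      by (simp add: times_cv_def mult.commute)
  qed
  show "1 * a = a"
    by (rule cv_eqI) (simp add: times_cv_def one_cv_def ifmul1)
  show "(a + b) * c = a * c + b * c"
    by (rule cv_eqI) (simp add: times_cv_def plus_cv_def algebra_simps sum.distrib)
  show "a + b + c = a + (b + c)" by (rule cv_eqI) (simp add: plus_cv_def)
  show "a + b = b + a" by (rule cv_eqI) (simp add: plus_cv_def)
  show "0 + a = a" by (rule cv_eqI) (simp add: plus_cv_def zero_cv_def)
  show "- a + a = 0" by (rule cv_eqI) (simp add: plus_cv_def zero_cv_def uminus_cv_def)
  show "a - b = a + - b" by (rule cv_eqI) (simp add: plus_cv_def minus_cv_def uminus_cv_def)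
  show "(0::'a cv) \<noteq> 1"
  proof
    assume "(0::'a cv) = 1"
    then have "val (0::'a cv) 0 = val 1 0" by simp
    then show False by (simp add: zero_cv_def one_cv_def)
  qed
qed
end


lemma val_plus [simp]: "val (a + b) x = val a x + val b x" by (simp add: plus_cv_def)
lemma val_minus [simp]: "val (a - b) x = val a x - val b x" by (simp add: minus_cv_def)
lemma val_uminus [simp]: "val (- a) x = - val a x" by (simp add: uminus_cv_def)
lemma val_zero [simp]: "val 0 x = 0" by (simp add: zero_cv_def)
lemma val_one: "val 1 x = (if x = 0 then 1 else 0)" by (simp add: one_cv_def)
lemma val_times: "val (a * b) x = (\<Sum>y\<in>UNIV. val a y * val b (x - y))" by (simp add: times_cv_def)

definition sc :: "real \<Rightarrow> 'a::{ab_group_add,finite} cv" where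
  "sc c = Abs_cv (\<lambda>x. if x = 0 then c else 0)"

lemma val_sc: "val (sc c) x = (if x = 0 then c else 0)" by (simp add: sc_def)

lemma ifmul2: "(if P then c else 0) * (v::real) = (if P then c * v else 0)" by simp

lemma sc_zero: "sc 0 = 0" by (rule cv_eqI) (simp add: val_sc)

lemma val_sc_mult [simp]: "val (sc c * a) x = c * val a x"
  by (simp add: val_times val_sc ifmul2)

lemma sc_mult: "sc a * sc b = sc (a * b)"
  by (rule cv_eqI) (simp add: val_sc)

lemma sc_one: "sc 1 = 1"
  by (rule cv_eqI) (simp add: val_sc val_one)

lemma sc_add: "sc (a + b) = sc a + sc b"
  by (rule cv_eqI) (simp add: val_sc)

lemma sc_power: "sc a ^ n = sc (a ^ n)"
  by (induction n) (simp_all add: sc_one sc_mult)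

lemma of_nat_cv: "(of_nat n :: 'a::{ab_group_add,finite} cv) = sc (real n)"
  by (induction n) (simp_all add: sc_one sc_add sc_zero add.commute)

lemma val_sum: "val (sum f A) x = (\<Sum>i\<in>A. val (f i) x)"
  by (induction A rule: infinite_finite_induct) simp_all

definition nonneg :: "'a::{ab_group_add,finite} cv \<Rightarrow> bool" where
  "nonneg a \<longleftrightarrow> (\<forall>x. 0 \<le> val a x)"

lemma nonneg_mult: "nonneg a \<Longrightarrow> nonneg b \<Longrightarrow> nonneg (a * b)"
  unfolding nonneg_def val_times by (auto intro!: sum_nonneg)

lemma nonneg_add: "nonneg a \<Longrightarrow> nonneg b \<Longrightarrow> nonneg (a + b)"
  unfolding nonneg_def by (auto intro!: add_nonneg_nonneg)

lemma nonneg_sc_mult: "0 \<le> c \<Longrightarrow> nonneg a \<Longrightarrow> nonneg (sc c * a)"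
  unfolding nonneg_def by auto

lemma nonneg_one: "nonneg 1"
  unfolding nonneg_def by (simp add: val_one)

lemma nonneg_power: "nonneg a \<Longrightarrow> nonneg (a ^ n)"
  by (induction n) (simp_all add: nonneg_one nonneg_mult)

lemma val_mult_ge: "nonneg a \<Longrightarrow> nonneg b \<Longrightarrow> val a 0 * val b x \<le> val (a * b) x"
  unfolding val_times nonneg_def
  by (rule member_le_sum[of 0 UNIV "\<lambda>y. val a y * val b (x - y)", simplified]) auto

definition Qp :: "'a::{ab_group_add,finite} cv \<Rightarrow> real \<Rightarrow> bool" where
  "Qp X a \<longleftrightarrow> nonneg X \<and> (\<forall>n. nonneg (sc (real n + 1 + a) * X^(Suc n) - sc (real n + 1) * X^n))"

lemma Qp_ineq: "Qp X a \<Longrightarrow> nonneg Y \<Longrightarrow>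
   (real n + 1) * val (X^n * Y) x \<le> (real n + 1 + a) * val (X^(Suc n) * Y) x"
proof -
  assume Q: "Qp X a" and Y: "nonneg Y"
  then have "nonneg ((sc (real n + 1 + a) * X^(Suc n) - sc (real n + 1) * X^n) * Y)"
    unfolding Qp_def by (blast intro: nonneg_mult)
  moreover have "(sc (real n + 1 + a) * X^(Suc n) - sc (real n + 1) * X^n) * Y
      = sc (real n + 1 + a) * (X^(Suc n) * Y) - sc (real n + 1) * (X^n * Y)"
    by (simp only: left_diff_distrib mult.assoc)
  ultimately show ?thesis unfolding nonneg_def by (metis diff_ge_0_iff_ge val_minus val_sc_mult)
qed

lemma gen: "(K::real) = C2 * M \<Longrightarrow> K * X * Y * Z = C2 * X * Y * (M * Z)"
  by (simp add: mult_ac)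

lemma Qreal:
  fixes f :: "nat \<Rightarrow> nat \<Rightarrow> real" and p q a b :: real
  assumes f0: "\<And>m l. 0 \<le> f m l" and p0: "0 \<le> p" and q0: "0 \<le> q" and pq: "p + q = 1"
    and a0: "0 \<le> a" and b0: "0 \<le> b"
    and hX: "\<And>m l. (real m + 1 + a) * f (Suc m) l \<ge> (real m + 1) * f m l"
    and hY: "\<And>m l. (real l + 1 + b) * f m (Suc l) \<ge> (real l + 1) * f m l"
  shows "(real k + 1 + a + b) * (\<Sum>m\<le>Suc k. real (Suc k choose m) * p^m * q^(Suc k - m) * f m (Suc k - m))
       \<ge> (real k + 1) * (\<Sum>m\<le>k. real (k choose m) * p^m * q^(k - m) * f m (k - m))"
proof -
  define g where "g = (\<Sum>m\<le>k. real (k choose m) * p^m * q^(k - m) * f m (k - m))"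
  define G where "G = (\<Sum>m\<le>Suc k. real (Suc k choose m) * p^m * q^(Suc k - m) * f m (Suc k - m))"
  define A where "A = (\<Sum>m\<le>k. real (k choose m) * p^(Suc m) * q^(k - m) * f (Suc m) (k - m))"
  define B where "B = (\<Sum>m\<le>k. real (k choose m) * p^m * q^(Suc k - m) * f m (Suc k - m))"
  define A2 where "A2 = (\<Sum>m\<le>k. real (Suc k choose Suc m) * p^(Suc m) * q^(k - m) * f (Suc m) (k - m))"
  define B2 where "B2 = (\<Sum>m\<le>k. real (Suc k choose m) * p^m * q^(Suc k - m) * f m (Suc k - m))"
  have GA2: "G = q^(Suc k) * f 0 (Suc k) + A2"
    unfolding G_def A2_def by (subst sum.atMost_Suc_shift) simp
  have GB2: "G = B2 + p^(Suc k) * f (Suc k) 0"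
    unfolding G_def B2_def by simp
  have Bs: "B = q^(Suc k) * f 0 (Suc k) + (\<Sum>m\<le>k. real (k choose Suc m) * p^(Suc m) * q^(k - m) * f (Suc m) (k - m))"
  proof -
    have "B = (\<Sum>m\<le>Suc k. real (k choose m) * p^m * q^(Suc k - m) * f m (Suc k - m))"
      unfolding B_def by simp
    also have "\<dots> = q^(Suc k) * f 0 (Suc k) + (\<Sum>m\<le>k. real (k choose Suc m) * p^(Suc m) * q^(k - m) * f (Suc m) (k - m))"
      by (subst sum.atMost_Suc_shift) simp
    finally show ?thesis .
  qed
  have GAB: "G = A + B"
    unfolding GA2 Bs A2_def A_def by (simp add: sum.distrib algebra_simps)
  have Abd: "(real k + 1) * A \<ge> (real k + 1) * p * g - a * A2"
  proof -
    have "(real k + 1) * real (k choose m) * p^(Suc m) * q^(k - m) * f (Suc m) (k - m)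
        \<ge> (real k + 1) * p * (real (k choose m) * p^m * q^(k - m) * f m (k - m))
          - a * (real (Suc k choose Suc m) * p^(Suc m) * q^(k - m) * f (Suc m) (k - m))" for m
    proof -
      have c: "(real k + 1) * real (k choose m) = real (Suc k choose Suc m) * (real m + 1)"
        using Suc_times_binomial_eq[of k m] by (metis of_nat_Suc of_nat_mult add.commute)
      have w: "0 \<le> real (Suc k choose Suc m) * p^(Suc m) * q^(k - m)"
        using p0 q0 by simp
      have h: "(real m + 1) * f (Suc m) (k - m) \<ge> (real m + 1) * f m (k - m) - a * f (Suc m) (k - m)"
        using hX[of m "k - m"] by (simp add: algebra_simps)
      have "real (Suc k choose Suc m) * p^(Suc m) * q^(k - m) * ((real m + 1) * f (Suc m) (k - m))
         \<ge> real (Suc k choose Suc m) * p^(Suc m) * q^(k - m) * ((real m + 1) * f m (k - m) - a * f (Suc m) (k - m))"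
        using mult_left_mono[OF h w] .
      moreover have "(real k + 1) * real (k choose m) * p^(Suc m) * q^(k - m) * f (Suc m) (k - m)
          = real (Suc k choose Suc m) * p^(Suc m) * q^(k - m) * ((real m + 1) * f (Suc m) (k - m))"
        using gen[OF c] .
      moreover have "(real k + 1) * p * (real (k choose m) * p^m * q^(k - m) * f m (k - m))
          = (real k + 1) * real (k choose m) * p^(Suc m) * q^(k - m) * f m (k - m)"
        by (simp add: mult_ac)
      moreover have "\<dots> = real (Suc k choose Suc m) * p^(Suc m) * q^(k - m) * ((real m + 1) * f m (k - m))"
        using gen[OF c] .
      moreover have "real (Suc k choose Suc m) * p^(Suc m) * q^(k - m) * ((real m + 1) * f m (k - m) - a * f (Suc m) (k - m))
          = real (Suc k choose Suc m) * p^(Suc m) * q^(k - m) * ((real m + 1) * f m (k - m)) - a * (real (Suc k choose Suc m) * p^(Suc m) * q^(k - m) * f (Suc m) (k - m))"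
        by (simp add: algebra_simps del: binomial_Suc_Suc)
      ultimately show ?thesis by linarith
    qed
    then have "(\<Sum>m\<le>k. (real k + 1) * real (k choose m) * p^(Suc m) * q^(k - m) * f (Suc m) (k - m))
        \<ge> (\<Sum>m\<le>k. (real k + 1) * p * (real (k choose m) * p^m * q^(k - m) * f m (k - m))
          - a * (real (Suc k choose Suc m) * p^(Suc m) * q^(k - m) * f (Suc m) (k - m)))"
      by (rule sum_mono)
    then show ?thesis unfolding A_def g_def A2_def
      by (simp add: sum_subtractf sum_distrib_left mult.assoc)
  qed
  have Bbd: "(real k + 1) * B \<ge> (real k + 1) * q * g - b * B2"
  proof -
    have "(real k + 1) * real (k choose m) * p^m * q^(Suc k - m) * f m (Suc k - m)
        \<ge> (real k + 1) * q * (real (k choose m) * p^m * q^(k - m) * f m (k - m))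
          - b * (real (Suc k choose m) * p^m * q^(Suc k - m) * f m (Suc k - m))" if mk: "m \<le> k" for m
    proof -
      have c0: "(Suc k - m) * (Suc k choose m) = Suc k * (k choose m)"
        using binomial_absorb_comp[of "Suc k" m] by simp
      have sk: "Suc k - m = Suc (k - m)" using mk by simp
      have c1: "real (Suc k - m) * real (Suc k choose m) = real (Suc k) * real (k choose m)"
        by (metis c0 of_nat_mult)
      have c: "(real k + 1) * real (k choose m) = real (Suc k choose m) * (real (k - m) + 1)"
        using c1 unfolding sk of_nat_Suc by (simp add: add.commute mult.commute)
      have w: "0 \<le> real (Suc k choose m) * p^m * q^(Suc k - m)"
        using p0 q0 by simp
      have h: "(real (k - m) + 1) * f m (Suc k - m) \<ge> (real (k - m) + 1) * f m (k - m) - b * f m (Suc k - m)"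
        using hY[of "k - m" m] sk by (simp add: algebra_simps)
      have "real (Suc k choose m) * p^m * q^(Suc k - m) * ((real (k - m) + 1) * f m (Suc k - m))
         \<ge> real (Suc k choose m) * p^m * q^(Suc k - m) * ((real (k - m) + 1) * f m (k - m) - b * f m (Suc k - m))"
        using mult_left_mono[OF h w] .
      moreover have "(real k + 1) * real (k choose m) * p^m * q^(Suc k - m) * f m (Suc k - m)
          = real (Suc k choose m) * p^m * q^(Suc k - m) * ((real (k - m) + 1) * f m (Suc k - m))"
        using gen[OF c] .
      moreover have "(real k + 1) * q * (real (k choose m) * p^m * q^(k - m) * f m (k - m))
          = (real k + 1) * real (k choose m) * p^m * q^(Suc k - m) * f m (k - m)"
        using sk by (simp add: mult_ac)
      moreover have "\<dots> = real (Suc k choose m) * p^m * q^(Suc k - m) * ((real (k - m) + 1) * f m (k - m))"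
        using gen[OF c] .
      moreover have "real (Suc k choose m) * p^m * q^(Suc k - m) * ((real (k - m) + 1) * f m (k - m) - b * f m (Suc k - m))
          = real (Suc k choose m) * p^m * q^(Suc k - m) * ((real (k - m) + 1) * f m (k - m)) - b * (real (Suc k choose m) * p^m * q^(Suc k - m) * f m (Suc k - m))"
        by (simp only: right_diff_distrib mult_ac)
      ultimately show ?thesis by linarith
    qed
    then have "(\<Sum>m\<le>k. (real k + 1) * real (k choose m) * p^m * q^(Suc k - m) * f m (Suc k - m))
        \<ge> (\<Sum>m\<le>k. (real k + 1) * q * (real (k choose m) * p^m * q^(k - m) * f m (k - m))
          - b * (real (Suc k choose m) * p^m * q^(Suc k - m) * f m (Suc k - m)))"
      by (intro sum_mono) simp
    then show ?thesis unfolding B_def g_def B2_def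
      by (simp add: sum_subtractf sum_distrib_left mult.assoc)
  qed
  have "0 \<le> q^(Suc k) * f 0 (Suc k)" using q0 f0 by simp
  then have "A2 \<le> G" using GA2 by simp
  have "0 \<le> p^(Suc k) * f (Suc k) 0" using p0 f0 by simp
  then have "B2 \<le> G" using GB2 by simp
  have "(real k + 1) * G \<ge> (real k + 1) * (p + q) * g - (a + b) * G"
  proof -
    have "a * A2 \<le> a * G" using \<open>A2 \<le> G\<close> a0 by (rule mult_left_mono)
    moreover have "b * B2 \<le> b * G" using \<open>B2 \<le> G\<close> b0 by (rule mult_left_mono)
    ultimately show ?thesis using Abd Bbd GAB by (simp add: algebra_simps)
  qed
  then show ?thesis using pq unfolding G_def[symmetric] g_def[symmetric] by (simp add: algebra_simps)
qed


lemma Qcomb: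
  fixes X Y :: "'a::{ab_group_add,finite} cv"
  assumes QX: "Qp X a" and QY: "Qp Y b" and p0: "0 \<le> p" and q0: "0 \<le> q" and pq: "p + q = 1"
    and a0: "0 \<le> a" and b0: "0 \<le> b"
  shows "Qp (sc p * X + sc q * Y) (a + b)"
proof -
  define W where "W = sc p * X + sc q * Y"
  have nX: "nonneg X" and nY: "nonneg Y" using QX QY unfolding Qp_def by auto
  have nW: "nonneg W" unfolding W_def using nX nY p0 q0 by (intro nonneg_add nonneg_sc_mult)
  have expand: "val (W^k) x = (\<Sum>m\<le>k. real (k choose m) * p^m * q^(k-m) * val (X^m * Y^(k-m)) x)" for k x
  proof -
    have "W^k = (\<Sum>m\<le>k. of_nat (k choose m) * (sc p * X)^m * (sc q * Y)^(k-m))"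
      unfolding W_def by (rule binomial_ring)
    also have "\<dots> = (\<Sum>m\<le>k. sc (real (k choose m) * p^m * q^(k-m)) * (X^m * Y^(k-m)))"
      by (rule sum.cong[OF refl]) (simp add: of_nat_cv power_mult_distrib sc_power sc_mult[symmetric] mult_ac)
    finally show ?thesis by (simp add: val_sum)
  qed
  have "nonneg (sc (real n + 1 + (a + b)) * W^(Suc n) - sc (real n + 1) * W^n)" for n
    unfolding nonneg_def
  proof
    fix x
    define f where "f m l = val (X^m * Y^l) x" for m l
    have f0: "0 \<le> f m l" for m l unfolding f_def using nonneg_mult[OF nonneg_power[OF nX] nonneg_power[OF nY]]
      unfolding nonneg_def by blast
    have hX: "(real m + 1 + a) * f (Suc m) l \<ge> (real m + 1) * f m l" for m l
      unfolding f_def using Qp_ineq[OF QX nonneg_power[OF nY]] .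
    have hY: "(real l + 1 + b) * f m (Suc l) \<ge> (real l + 1) * f m l" for m l
      unfolding f_def using Qp_ineq[OF QY nonneg_power[OF nX], where n=l and x=x] by (simp add: mult.commute)
    have "(real n + 1 + a + b) * (\<Sum>m\<le>Suc n. real (Suc n choose m) * p^m * q^(Suc n - m) * f m (Suc n - m))
       \<ge> (real n + 1) * (\<Sum>m\<le>n. real (n choose m) * p^m * q^(n - m) * f m (n - m))"
      by (rule Qreal[OF f0 p0 q0 pq a0 b0 hX hY])
    then show "0 \<le> val (sc (real n + 1 + (a + b)) * W^(Suc n) - sc (real n + 1) * W^n) x"
      unfolding f_def expand[symmetric] by (simp add: add.assoc)
  qed
  then show ?thesis using nW unfolding Qp_def W_def by blast
qed

lemma binfact:
  assumes i: "i \<le> 2*n"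
  shows "(4*(real n+1)) * real (2*n choose i) \<le> (real n + 2) * real (Suc (Suc (2*n)) choose Suc i)"
proof -
  have e1: "Suc (Suc (2*n)) * (Suc (2*n) choose i) = (Suc (Suc (2*n)) choose Suc i) * Suc i"
    by (rule Suc_times_binomial_eq)
  have e2: "(Suc (2*n) - i) * (Suc (2*n) choose i) = Suc (2*n) * (2*n choose i)"
    using binomial_absorb_comp[of "Suc (2*n)" i] by simp
  define C2 where "C2 = real (Suc (Suc (2*n)) choose Suc i)"
  define C1 where "C1 = real (Suc (2*n) choose i)"
  define C0 where "C0 = real (2*n choose i)"
  define j where "j = real (Suc (2*n) - i)"
  have r1: "(2*real n + 2) * C1 = C2 * (real i + 1)"
    using arg_cong[OF e1, of real] unfolding C2_def C1_def by (simp del: binomial_Suc_Suc add: algebra_simps)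
  have r2: "j * C1 = (2*real n + 1) * C0"
    using arg_cong[OF e2, of real] unfolding j_def C1_def C0_def by (simp only: of_nat_mult) simp
  have jv: "j = 2*real n + 1 - real i" unfolding j_def using i by (simp add: of_nat_diff)
  have P: "(real i + 1) * j \<le> (real n + 1)^2"
  proof -
    have "(real n + 1)^2 - (real i + 1) * (2*real n + 1 - real i) = (real i - real n)^2"
      by (simp add: power2_eq_square algebra_simps)
    moreover have "0 \<le> (real i - real n)^2" by simp
    ultimately show ?thesis unfolding jv by linarith
  qed
  have C0: "0 \<le> C0" "0 \<le> C2" unfolding C0_def C2_def by simp_all
  have key: "C2 * (real i + 1) * j = (2*real n + 2) * (2*real n + 1) * C0"
    using r1 r2 by (metis mult.assoc mult.commute)
  have "(real n + 1)^2 * (4*(real n+1) * C0) \<le> (real n + 1)^2 * ((real n + 2) * C2)"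
  proof -
    have "(real n + 1)^2 * (4*(real n+1) * C0) \<le> (real n + 2) * ((2*real n + 2) * (2*real n + 1) * C0)"
    proof -
      have "(real n + 1)^2 * (4*(real n+1)) \<le> (real n + 2) * ((2*real n + 2) * (2*real n + 1))"
        by (simp add: power2_eq_square algebra_simps)
      from mult_right_mono[OF this C0(1)] show ?thesis by (simp add: mult.assoc)
    qed
    also have "\<dots> = (real n + 2) * (C2 * ((real i + 1) * j))" using key by (simp add: mult.assoc)
    also have "\<dots> \<le> (real n + 2) * (C2 * (real n + 1)^2)"
      using P C0 by (intro mult_left_mono) auto
    finally show ?thesis by (simp add: algebra_simps)
  qed
  then show ?thesis unfolding C0_def C2_def by (simp add: mult_le_cancel_left)
qed


lemma Qp_one: "Qp (1::'a::{ab_group_add,finite} cv) 0"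
  unfolding Qp_def by (simp add: nonneg_one nonneg_def val_one)

definition dl :: "'a \<Rightarrow> 'a::{ab_group_add,finite} cv" where
  "dl s = Abs_cv (\<lambda>x. if x = s then 1 else 0)"

lemma val_dl: "val (dl s) x = (if x = s then 1 else 0)" by (simp add: dl_def)

lemma dl_mult: "dl a * dl b = dl (a + b)"
proof (rule cv_eqI)
  fix x
  have "val (dl a * dl b) x = (\<Sum>y\<in>UNIV. if y = a then (if x - y = b then 1 else 0) else 0)"
    by (simp add: val_times val_dl ifmul1)
  also have "\<dots> = (if x - a = b then 1 else 0)" by simp
  also have "\<dots> = val (dl (a + b)) x" by (auto simp: val_dl algebra_simps)
  finally show "val (dl a * dl b) x = val (dl (a + b)) x" .
qed

lemma dl_zero: "dl 0 = 1" by (rule cv_eqI) (simp add: val_dl val_one)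

lemma nonneg_dl: "nonneg (dl s)" unfolding nonneg_def by (simp add: val_dl)

definition bet :: "'a \<Rightarrow> 'a::{ab_group_add,finite} cv" where
  "bet s = sc (1/4) * ((1 + dl s) * (1 + dl (- s)))"

lemma val_bet: "val (bet s) x = (if x = 0 then 1/2 else 0) + (if x = s then 1/4 else 0) + (if x = - s then 1/4 else 0)"
proof -
  have eq: "(1 + dl s) * (1 + dl (- s)) = 1 + 1 + dl s + dl (- s)"
    by (simp add: algebra_simps dl_mult dl_zero)
  have "val ((1 + dl s) * (1 + dl (- s))) x = val 1 x + val 1 x + val (dl s) x + val (dl (- s)) x"
    by (simp only: eq val_plus)
  then show ?thesis unfolding bet_def by (simp add: val_one val_dl)
qed

lemma nonneg_bet: "nonneg (bet s)"
  unfolding nonneg_def val_bet by simp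

lemma bet_pow: "bet s ^ n = sc ((1/4)^n) * (dl (- s) ^ n * (1 + dl s) ^ (2 * n))"
proof -
  have "1 + dl (- s) = dl (- s) * (1 + dl s)"
    by (simp add: algebra_simps dl_mult dl_zero)
  then have "bet s = sc (1/4) * (dl (- s) * (1 + dl s)^2)"
    unfolding bet_def by (simp add: power2_eq_square mult_ac)
  then show ?thesis
    by (simp add: power_mult_distrib sc_power power_mult)
qed

lemma val_bet_pow: "val (bet s ^ n) x = (1/4)^n * (\<Sum>i\<le>2*n. real (2*n choose i) * val (dl (- s) ^ n * dl s ^ i) x)"
proof -
  have "(1 + dl s) ^ (2 * n) = (\<Sum>i\<le>2*n. of_nat (2*n choose i) * dl s ^ i * 1 ^ (2*n - i))"
    using binomial_ring[of "dl s" 1 "2*n"] by (simp add: add.commute)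
  then have "dl (- s) ^ n * (1 + dl s) ^ (2 * n) = (\<Sum>i\<le>2*n. sc (real (2*n choose i)) * (dl (- s) ^ n * dl s ^ i))"
    by (simp add: sum_distrib_left of_nat_cv mult_ac)
  then show ?thesis unfolding bet_pow by (simp add: val_sum)
qed

lemma Qp_bet: "Qp (bet s) 1"
  unfolding Qp_def
proof (intro conjI allI)
  show "nonneg (bet s)" by (rule nonneg_bet)
  fix n
  show "nonneg (sc (real n + 1 + 1) * bet s ^ Suc n - sc (real n + 1) * bet s ^ n)"
    unfolding nonneg_def
  proof
    fix x
    define E where "E m i = val (dl (- s) ^ m * dl s ^ i) x" for m i
    have E0: "0 \<le> E m i" for m i unfolding E_def
      using nonneg_mult[OF nonneg_power[OF nonneg_dl] nonneg_power[OF nonneg_dl]] unfolding nonneg_def by blast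
    have ES: "E (Suc m) (Suc i) = E m i" for m i
    proof -
      have "dl (- s) ^ Suc m * dl s ^ Suc i = dl (- s) ^ m * dl s ^ i * (dl (- s) * dl s)"
        by (simp add: mult_ac)
      then show ?thesis unfolding E_def by (simp add: dl_mult dl_zero)
    qed
    define F where "F i = real (Suc (Suc (2*n)) choose i) * E (Suc n) i" for i
    have F0: "0 \<le> F i" for i unfolding F_def using E0 by simp
    have "val (bet s ^ Suc n) x = (1/4)^(Suc n) * (\<Sum>i\<le>Suc (Suc (2*n)). F i)"
      unfolding val_bet_pow F_def E_def by simp
    also have "(\<Sum>i\<le>Suc (Suc (2*n)). F i) = F 0 + ((\<Sum>i\<le>2*n. F (Suc i)) + F (Suc (Suc (2*n))))"
      by (subst sum.atMost_Suc_shift, subst sum.atMost_Suc, rule refl)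
    finally have v1: "val (bet s ^ Suc n) x \<ge> (1/4)^(Suc n) * (\<Sum>i\<le>2*n. F (Suc i))"
      using F0[of 0] F0[of "Suc (Suc (2*n))"] by (simp add: mult_left_mono)
    have v0: "val (bet s ^ n) x = (1/4)^n * (\<Sum>i\<le>2*n. real (2*n choose i) * E n i)"
      unfolding val_bet_pow E_def by simp
    have "(real n + 1) * ((1/4)^n * (\<Sum>i\<le>2*n. real (2*n choose i) * E n i))
        = (\<Sum>i\<le>2*n. (real n + 1) * (1/4)^n * real (2*n choose i) * E n i)"
      by (simp add: sum_distrib_left mult_ac)
    also have "\<dots> \<le> (\<Sum>i\<le>2*n. (real n + 2) * (1/4)^(Suc n) * F (Suc i))"
    proof (rule sum_mono)
      fix i assume "i \<in> {..2*n}"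
      then have i: "i \<le> 2*n" by simp
      have "(4*(real n+1)) * real (2*n choose i) * ((1/4)^(Suc n) * E n i)
          \<le> (real n + 2) * real (Suc (Suc (2*n)) choose Suc i) * ((1/4)^(Suc n) * E n i)"
        using binfact[OF i] E0[of n i] by (intro mult_right_mono) auto
      then show "(real n + 1) * (1/4)^n * real (2*n choose i) * E n i \<le> (real n + 2) * (1/4)^(Suc n) * F (Suc i)"
        unfolding F_def ES by (simp add: algebra_simps del: binomial_Suc_Suc)
    qed
    also have "\<dots> = (real n + 2) * ((1/4)^(Suc n) * (\<Sum>i\<le>2*n. F (Suc i)))"
      by (simp add: sum_distrib_left mult_ac)
    also have "\<dots> \<le> (real n + 2) * val (bet s ^ Suc n) x"
      using v1 by (intro mult_left_mono) auto
    finally show "0 \<le> val (sc (real n + 1 + 1) * bet s ^ Suc n - sc (real n + 1) * bet s ^ n) x"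
      using v0 by (simp add: add.commute)
  qed
qed


lemma exists_sigma:
  fixes M :: "'a::{ab_group_add,finite} multiset"
  shows "\<exists>Z. Qp Z (real (size M)) \<and> (\<forall>x. real (size M) * val Z x =
     real (size M) / 2 * (if x = 0 then 1 else 0) + (real (count M x) + real (count M (- x))) / 4)"
proof (induction M rule: multiset_induct)
  case empty
  show ?case by (rule exI[of _ 1]) (simp add: Qp_one)
next
  case (add s M)
  then obtain Z where QZ: "Qp Z (real (size M))"
    and fZ: "\<And>x. real (size M) * val Z x =
     real (size M) / 2 * (if x = 0 then 1 else 0) + (real (count M x) + real (count M (- x))) / 4" by blast
  define m where "m = real (size M)"
  have m0: "0 \<le> m" unfolding m_def by simp
  define Z' where "Z' = sc (1 / (m + 1)) * bet s + sc (m / (m + 1)) * Z"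
  have "Qp Z' (1 + m)" unfolding Z'_def
    by (rule Qcomb[OF Qp_bet QZ[folded m_def]]) (use m0 in \<open>auto simp: field_simps\<close>)
  moreover have "(m + 1) * val Z' x = m / 2 * (if x = 0 then 1 else 0) + (if x = 0 then 1/2 else 0)
     + (real (count (add_mset s M) x) + real (count (add_mset s M) (- x))) / 4" for x
  proof -
    have "val Z' x = 1 / (m + 1) * val (bet s) x + m / (m + 1) * val Z x"
      unfolding Z'_def by (simp only: val_plus val_sc_mult)
    moreover have h: "(m + 1) * (1 / (m + 1)) = 1" "(m + 1) * (m / (m + 1)) = m" using m0 by auto
    ultimately have "(m + 1) * val Z' x = val (bet s) x + m * val Z x"
      by (simp only: distrib_left mult.assoc[symmetric] h mult_1_left)
    moreover have "(x = - s) = (s = - x)" by auto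
    ultimately show ?thesis using fZ[of x] unfolding m_def[symmetric] val_bet
      by (auto simp: field_simps)
  qed
  ultimately show ?case unfolding m_def
    by (intro exI[of _ Z']) (auto simp: field_simps)
qed

lemma sum_sq_val: "(\<Sum>y\<in>UNIV. val a y * val a y) = val (a * a) 0"
  if "\<And>x. val a (- x) = val a x" for a :: "'a::{ab_group_add,finite} cv"
  by (simp add: val_times that)

lemma symm_mult:
  fixes a b :: "'a::{ab_group_add,finite} cv"
  assumes "\<And>x. val a (- x) = val a x" "\<And>x. val b (- x) = val b x"
  shows "val (a * b) (- x) = val (a * b) x"
proof -
  have "val (a * b) (- x) = (\<Sum>y\<in>UNIV. val a (- y) * val b (- x - - y))"
    unfolding val_times by (rule sum_neg[symmetric])
  also have "\<dots> = (\<Sum>y\<in>UNIV. val a y * val b (x - y))"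
  proof (rule sum.cong[OF refl])
    fix y
    have eq: "- x - - y = - (x - y)" by simp
    have "val b (- x - - y) = val b (x - y)" by (subst eq) (rule assms(2))
    then show "val a (- y) * val b (- x - - y) = val a y * val b (x - y)"
      using assms(1)[of y] by simp
  qed
  finally show ?thesis by (simp add: val_times)
qed

lemma symm_power:
  fixes a :: "'a::{ab_group_add,finite} cv"
  assumes "\<And>x. val a (- x) = val a x"
  shows "val (a ^ n) (- x) = val (a ^ n) x"
proof (induction n arbitrary: x)
  case 0 then show ?case by (simp add: val_one)
next
  case (Suc n) then show ?case using symm_mult[of a "a^n", OF assms] by simp
qed


lemma matpow_commute: "matpow M k ** M = M ** matpow M k"
proof (induction k)
  case 0 show ?case by (simp add: matrix_mul_lid matrix_mul_rid)
next
  case (Suc k)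
  have "matpow M (Suc k) ** M = (matpow M k ** M) ** M" by simp
  also have "\<dots> = (M ** matpow M k) ** M" by (simp only: Suc.IH)
  also have "\<dots> = M ** (matpow M k ** M)" by (simp only: matrix_mul_assoc)
  also have "\<dots> = M ** matpow M (Suc k)" by simp
  finally show ?case .
qed

lemma mv_comp: "(A *v y) $ u = (\<Sum>v\<in>UNIV. A $ u $ v * y $ v)"
  by (simp add: matrix_vector_mult_def)

lemma CP_conv:
  fixes S :: "('a::{ab_group_add,finite}) multiset" and Z :: "'a cv"
  assumes valZ: "\<And>x. val Z x = (if x = 0 then 1/2 else 0) + real (count S x) / (2 * real (size S))"
    and Zsym: "\<And>x. val Z (- x) = val Z x"
  shows "CP S t = val (Z ^ (2 * t)) 0"
proof -
  have Wentry: "lazy_walk S $ u $ v = val Z (v - u)" for u v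
    unfolding lazy_walk_def cay_norm_adj_def cay_adj_def valZ by (simp add: mat_def)
  have r: "(matpow (lazy_walk S) k *v axis 0 1) $ u = val (Z^k) (- u)" for k u
  proof (induction k arbitrary: u)
    case 0
    show ?case by (simp add: matrix_vector_mul_lid axis_def val_one)
  next
    case (Suc k)
    have "(matpow (lazy_walk S) (Suc k) *v axis 0 1) $ u = (lazy_walk S *v (matpow (lazy_walk S) k *v axis 0 1)) $ u"
      by (simp add: matpow_commute matrix_vector_mul_assoc)
    also have "\<dots> = (\<Sum>v\<in>UNIV. val Z (v - u) * val (Z^k) (- v))"
      by (subst mv_comp) (simp only: Wentry Suc.IH)
    also have "\<dots> = (\<Sum>y\<in>UNIV. val Z y * val (Z^k) (- u - y))"
      using sum_shift[of "\<lambda>v. val Z (v - u) * val (Z^k) (- v)" u, symmetric]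
      by simp
    also have "\<dots> = val (Z^(Suc k)) (- u)" by (simp add: val_times)
    finally show ?case .
  qed
  have "CP S t = (\<Sum>u\<in>UNIV. ((matpow (lazy_walk S) t *v axis 0 1) $ u)^2)"
    unfolding CP_def norm_vec_def L2_set_def by (simp add: sum_nonneg)
  also have "\<dots> = (\<Sum>u\<in>UNIV. val (Z^t) u * val (Z^t) u)"
    by (simp add: r symm_power[OF Zsym] power2_eq_square)
  also have "\<dots> = val (Z^t * Z^t) 0"
    by (rule sum_sq_val) (rule symm_power[OF Zsym])
  also have "\<dots> = val (Z ^ (2 * t)) 0" by (simp add: mult_2 power_add)
  finally show ?thesis .
qed


theorem lemma4p4:
  fixes S :: "('a::{ab_group_add,finite}) multiset" and d t :: nat
  assumes "symmetric_mset S"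
    and "size S = d"
    and "d \<ge> 1"
  shows "CP S t / CP S (2 * t) \<le> (2 * exp 1) ^ (4 * d)"
proof -
  obtain Z where QZ: "Qp Z (real (size S))" and fZ: "\<And>x. real (size S) * val Z x =
     real (size S) / 2 * (if x = 0 then 1 else 0) + (real (count S x) + real (count S (- x))) / 4"
    using exists_sigma[of S] by blast
  have sym: "count S (- x) = count S x" for x
    using assms(1) unfolding symmetric_mset_def by metis
  have dpos: "real (size S) > 0" using assms(2,3) by simp
  have valZ: "val Z x = (if x = 0 then 1/2 else 0) + real (count S x) / (2 * real (size S))" for x
  proof -
    have "real (size S) * val Z x = real (size S) * ((if x = 0 then 1/2 else 0) + real (count S x) / (2 * real (size S)))"
      using fZ[of x] dpos unfolding sym by (simp add: field_simps)
    then show ?thesis by (subst (asm) mult_left_cancel) (use dpos in auto)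
  qed
  have Zsym: "val Z (- x) = val Z x" for x
    unfolding valZ sym by simp
  have nZ: "nonneg Z" using QZ unfolding Qp_def by blast
  define c where "c k = val (Z ^ k) 0" for k
  have CPc: "CP S k = c (2 * k)" for k unfolding c_def by (rule CP_conv[OF valZ Zsym])
  have step: "(real k + 1) * c k \<le> (real k + 1 + real d) * c (Suc k)" for k
    using Qp_ineq[OF QZ nonneg_one, of k 0] assms(2) unfolding c_def by simp
  define h where "h k = pochhammer (real k + 1) d * c k" for k
  have hmono: "h k \<le> h (Suc k)" for k
  proof -
    have pr: "(real k + 1) * pochhammer (real k + 2) d = (real k + 1 + real d) * pochhammer (real k + 1) d"
      using pochhammer_rec[of "real k + 1" d] pochhammer_rec'[of "real k + 1" d]
      by (simp add: add.assoc algebra_simps)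
    have p0: "0 \<le> pochhammer (real k + 1) d" by (rule less_imp_le, rule pochhammer_pos) simp
    have "(real k + 1) * h k = pochhammer (real k + 1) d * ((real k + 1) * c k)"
      unfolding h_def by (simp add: mult_ac)
    also have "\<dots> \<le> pochhammer (real k + 1) d * ((real k + 1 + real d) * c (Suc k))"
      using step[of k] p0 by (rule mult_left_mono)
    also have "\<dots> = (real k + 1) * pochhammer (real k + 2) d * c (Suc k)"
      using pr by (simp add: mult_ac)
    also have "\<dots> = (real k + 1) * h (Suc k)"
    proof -
      have e: "real (Suc k) + 1 = real k + 2" by simp
      show ?thesis unfolding h_def e by (simp only: mult_ac)
    qed
    finally show ?thesis by simp
  qed
  have hle: "h k \<le> h (k + m)" for k m
  proof (induction m)
    case 0 show ?case by simp
  next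
    case (Suc m)
    have "h (k + m) \<le> h (Suc (k + m))" by (rule hmono)
    then show ?case using Suc.IH by simp
  qed
  have "h (2 * t) \<le> h (2 * t + 2 * t)" by (rule hle)
  then have hh: "pochhammer (real (2*t) + 1) d * c (2 * t) \<le> pochhammer (real (2*(2*t)) + 1) d * c (2 * (2 * t))"
  proof -
    have e1: "2*t + 2*t = 2*(2*t)" by simp
    show ?thesis using \<open>h (2 * t) \<le> h (2 * t + 2 * t)\<close> unfolding h_def by (simp only: e1)
  qed
  have cpos: "c k > 0" for k
  proof -
    have "c k \<ge> (1/2)^k"
    proof (induction k)
      case 0 then show ?case by (simp add: c_def val_one)
    next
      case (Suc k)
      have "val Z 0 * c k \<le> c (Suc k)"
        unfolding c_def using val_mult_ge[OF nZ nonneg_power[OF nZ]] by simp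
      moreover have "1/2 \<le> val Z 0" unfolding valZ using dpos by simp
      moreover have "0 \<le> c k"
      proof -
        have "0 \<le> (1/2::real)^k" by simp
        then show ?thesis using Suc.IH by linarith
      qed
      ultimately have "1/2 * c k \<le> c (Suc k)"
        using mult_right_mono[of "1/2" "val Z 0" "c k"] by linarith
      moreover have "(1/2)^(Suc k) = 1/2 * (1/2::real)^k" by simp
      moreover have "1/2 * (1/2::real)^k \<le> 1/2 * c k" using Suc.IH by simp
      ultimately show ?case by linarith
    qed
    moreover have "0 < (1/2::real)^k" by simp
    ultimately show ?thesis by linarith
  qed
  have pp: "pochhammer (real (2*(2*t)) + 1) d \<le> 2^d * pochhammer (real (2*t) + 1) d"
  proof -
    have "pochhammer (real (2*(2*t)) + 1) d = (\<Prod>i=0..<d. real (2*(2*t)) + 1 + real i)"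
      by (simp add: pochhammer_prod)
    also have "\<dots> \<le> (\<Prod>i=0..<d. 2 * (real (2*t) + 1 + real i))"
      by (rule prod_mono) auto
    also have "\<dots> = 2^d * pochhammer (real (2*t) + 1) d"
      unfolding pochhammer_prod prod.distrib by simp
    finally show ?thesis .
  qed
  have ppos: "pochhammer (real (2*t) + 1) d > 0" by (rule pochhammer_pos) simp
  have "pochhammer (real (2*t) + 1) d * c (2 * t) \<le> pochhammer (real (2*t) + 1) d * (2^d * c (2 * (2 * t)))"
    using hh mult_right_mono[OF pp less_imp_le[OF cpos[of "2*(2*t)"]]] by (simp add: mult_ac)
  then have c2: "c (2 * t) \<le> 2^d * c (2 * (2 * t))"
    using ppos by (simp add: mult_le_cancel_left_pos)
  have "CP S t / CP S (2 * t) = c (2 * t) / c (2 * (2 * t))" unfolding CPc ..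
  also have "\<dots> \<le> 2^d" using c2 cpos[of "2*(2*t)"] by (simp add: divide_le_eq)
  also have "\<dots> \<le> ((2 * exp 1)^4)^d"
  proof (rule power_mono)
    have e: "1 \<le> exp (1::real)" by simp
    have "1 \<le> 2 * exp (1::real)" using e by linarith
    from power_increasing[of 1 4, OF _ this] have "2 * exp 1 \<le> (2 * exp (1::real))^4"
      by (simp only: power_one_right)
    then show "2 \<le> (2 * exp (1::real))^4" using e by linarith
  qed simp
  also have "\<dots> = (2 * exp 1) ^ (4 * d)" by (simp add: power_mult)
  finally show ?thesis .
qed

end
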